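(* Let $G$ be a finite simple graph, $\mathbb{K}$ a field, $R=\mathbb{K}[z:z\in V(G)]$, and $I_3(G)\subseteq R$ its $3$-path ideal. Let $e=\{x,y\}\in E(G)$. Then: (1) $I_3(G):xy=L+J$, where $L=\langle z : z\in N_G(e)\rangle$ and $J=I_3(G\setminus N_G[e])R$. (2) $(I_3(G)+\langle xy\rangle):x=\langle y\rangle+I_2(H)+I_3(G\setminus N_G[x])R$, where $H$ is the graph whose edge set is the union of $N_G^{\mathrm{edge}}(x)$ and the edge set of the complete graph on the vertex set $N_G(x)\setminus\{y\}$.
   Context: A $3$-path in $G$ is a sequence of three distinct vertices $a,b,c$ with $\{a,b\},\{b,c\}\in E(G)$; $I_3(G)=\langle abc : a,b,c \text{ a } 3\text{-path in } G\rangle$. For a subset $S\subseteq V(G)$, $G\setminus S$ denotes the induced subgraph of $G$ on $V(G)\setminus S$, and its $3$-path ideal is regarded inside $R$. $N_G(z)$ is the set of neighbors of $z$, $N_G[z]=N_G(z)\cup\{z\}$. For an edge $e=\{x,y\}$, $N_G(e)=(N_G(x)\setminus\{y\})\cup(N_G(y)\setminus\{x\})$ and $N_G[e]=N_G[x]\cup N_G[y]$. For a vertex $x$, $N_G^{\mathrm{edge}}(x)=\{\{a,b\}\in E(G) : x,a,b \text{ is a } 3\text{-path in } G\}$. For a graph $H$, $I_2(H)$ is its edge ideal, generated by $ab$ for $\{a,b\}\in E(H)$. *)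

theory Defs
  imports "HOL-Library.Poly_Mapping"
begin

text \<open>Polynomial ring K[z : z in V] with V = UNIV of a finite type 'v:
  polynomials are finitely supported maps from monomials (exponent vectors) to coefficients.\<close>
type_synonym ('v, 'k) mpoly = "('v \<Rightarrow>\<^sub>0 nat) \<Rightarrow>\<^sub>0 'k"

definition Var :: "'v \<Rightarrow> ('v, 'k::comm_ring_1) mpoly" where
  "Var z = Poly_Mapping.single (Poly_Mapping.single z 1) 1"

definition ideal_gen :: "'a::comm_ring_1 set \<Rightarrow> 'a set" where
  "ideal_gen S = {\<Sum>s\<in>F. c s * s | F c. finite F \<and> F \<subseteq> S}"

definition ideal_sum :: "'a::comm_ring_1 set \<Rightarrow> 'a set \<Rightarrow> 'a set" where
  "ideal_sum I J = {a + b | a b. a \<in> I \<and> b \<in> J}"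

definition colon :: "'a::comm_ring_1 set \<Rightarrow> 'a \<Rightarrow> 'a set" where
  "colon I f = {g. g * f \<in> I}"

text \<open>Simple graphs on vertex set UNIV :: 'v set, given by their edge set.\<close>
definition simple_graph :: "'v set set \<Rightarrow> bool" where
  "simple_graph E \<longleftrightarrow> (\<forall>e\<in>E. card e = 2)"

text \<open>Edge set of the induced subgraph G \ S.\<close>
definition del_verts :: "'v set set \<Rightarrow> 'v set \<Rightarrow> 'v set set" where
  "del_verts E S = {e \<in> E. e \<inter> S = {}}"

definition is_3path :: "'v set set \<Rightarrow> 'v \<Rightarrow> 'v \<Rightarrow> 'v \<Rightarrow> bool" where
  "is_3path E a b c \<longleftrightarrow> a \<noteq> b \<and> b \<noteq> c \<and> a \<noteq> c \<and> {a, b} \<in> E \<and> {b, c} \<in> E"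

definition I3 :: "'v set set \<Rightarrow> ('v, 'k::comm_ring_1) mpoly set" where
  "I3 E = ideal_gen {Var a * Var b * Var c | a b c. is_3path E a b c}"

definition I2 :: "'v set set \<Rightarrow> ('v, 'k::comm_ring_1) mpoly set" where
  "I2 E = ideal_gen {Var a * Var b | a b. {a, b} \<in> E}"

definition nbhd :: "'v set set \<Rightarrow> 'v \<Rightarrow> 'v set" where
  "nbhd E z = {w. {z, w} \<in> E}"

definition cnbhd :: "'v set set \<Rightarrow> 'v \<Rightarrow> 'v set" where
  "cnbhd E z = insert z (nbhd E z)"

definition edge_nbhd :: "'v set set \<Rightarrow> 'v \<Rightarrow> 'v \<Rightarrow> 'v set" where
  "edge_nbhd E x y = (nbhd E x - {y}) \<union> (nbhd E y - {x})"

definition edge_cnbhd :: "'v set set \<Rightarrow> 'v \<Rightarrow> 'v \<Rightarrow> 'v set" where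
  "edge_cnbhd E x y = cnbhd E x \<union> cnbhd E y"

definition nbhd_edge :: "'v set set \<Rightarrow> 'v \<Rightarrow> 'v set set" where
  "nbhd_edge E x = {{a, b} | a b. {a, b} \<in> E \<and> is_3path E x a b}"

definition complete_edges :: "'v set \<Rightarrow> 'v set set" where
  "complete_edges W = {{a, b} | a b. a \<in> W \<and> b \<in> W \<and> a \<noteq> b}"

end

theory Submission
  imports Defs
begin


definition mon :: "('v \<Rightarrow>\<^sub>0 nat) \<Rightarrow> ('v, 'k::comm_ring_1) mpoly" where
  "mon m = Poly_Mapping.single m 1"

definition mle :: "('v \<Rightarrow>\<^sub>0 nat) \<Rightarrow> ('v \<Rightarrow>\<^sub>0 nat) \<Rightarrow> bool" where
  "mle s t \<longleftrightarrow> (\<forall>v. Poly_Mapping.lookup s v \<le> Poly_Mapping.lookup t v)"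

definition mideal :: "('v \<Rightarrow>\<^sub>0 nat) set \<Rightarrow> ('v, 'k::comm_ring_1) mpoly set" where
  "mideal S = {p. \<forall>t\<in>Poly_Mapping.keys p. \<exists>s\<in>S. mle s t}"

lemma mle_trans: "mle a b \<Longrightarrow> mle b c \<Longrightarrow> mle a c"
  unfolding mle_def using le_trans by blast

lemma mle_add: "mle s (t + s)"
  unfolding mle_def by (simp add: lookup_add)

lemma mle_diff: "mle s t \<Longrightarrow> t - s + s = t"
  unfolding mle_def by (intro poly_mapping_eqI) (simp add: lookup_add lookup_minus)

lemma decomp: "p = (\<Sum>t\<in>Poly_Mapping.keys p. Poly_Mapping.single t (Poly_Mapping.lookup p t))"
proof (rule poly_mapping_eqI)
  fix k
  have "Poly_Mapping.lookup (\<Sum>t\<in>Poly_Mapping.keys p. Poly_Mapping.single t (Poly_Mapping.lookup p t)) k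
      = (\<Sum>t\<in>Poly_Mapping.keys p. (Poly_Mapping.lookup p t when t = k))"
    by (simp add: lookup_sum lookup_single)
  also have "\<dots> = Poly_Mapping.lookup p k"
    by (cases "k \<in> Poly_Mapping.keys p") (auto simp: when_def in_keys_iff)
  finally show "Poly_Mapping.lookup p k = Poly_Mapping.lookup (\<Sum>t\<in>Poly_Mapping.keys p. Poly_Mapping.single t (Poly_Mapping.lookup p t)) k" by simp
qed

lemma keys_sum_single: "Poly_Mapping.keys (\<Sum>t\<in>T. Poly_Mapping.single t (f t)) \<subseteq> T"
proof -
  have "Poly_Mapping.keys (\<Sum>t\<in>T. Poly_Mapping.single t (f t)) \<subseteq> (\<Union>t\<in>T. Poly_Mapping.keys (Poly_Mapping.single t (f t)))"
    by (rule keys_sum)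
  also have "\<dots> \<subseteq> T" by auto
  finally show ?thesis .
qed

lemma lookup_mult_mon:
  fixes g :: "('v,'k::comm_ring_1) mpoly"
  shows "Poly_Mapping.lookup (g * mon m) (t + m) = Poly_Mapping.lookup g t"
proof -
  have inner: "(\<Sum>q. (Poly_Mapping.lookup (mon m :: ('v,'k) mpoly) q when t + m = l + q))
      = (1 when l = t)" for l
  proof -
    have "(\<Sum>q. (Poly_Mapping.lookup (mon m :: ('v,'k) mpoly) q when t + m = l + q))
        = (\<Sum>q. ((1::'k) when t + m = l + q) when q = m)"
    proof -
      have "\<And>q. (Poly_Mapping.lookup (mon m :: ('v,'k) mpoly) q when t + m = l + q)
          = (((1::'k) when t + m = l + q) when q = m)"
        by (simp add: mon_def lookup_single when_def)
      then show ?thesis by (simp only:)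
    qed
    also have "\<dots> = (1 when t + m = l + m)" by (rule Sum_any_when_equal)
    also have "\<dots> = (1 when l = t)" by (rule when_cong) auto
    finally show ?thesis .
  qed
  have "Poly_Mapping.lookup (g * mon m) (t + m) = (\<Sum>l. Poly_Mapping.lookup g l * (\<Sum>q. (Poly_Mapping.lookup (mon m :: ('v,'k) mpoly) q when t + m = l + q)))"
    by (rule lookup_mult)
  also have "\<dots> = (\<Sum>l. (Poly_Mapping.lookup g l when l = t))"
    by (simp only: inner mult_when mult_1_right)
  also have "\<dots> = Poly_Mapping.lookup g t" by (rule Sum_any_when_equal)
  finally show ?thesis .
qed

lemma keys_mult_mon: "Poly_Mapping.keys (g * (mon m :: ('v,'k::comm_ring_1) mpoly)) = (\<lambda>t. t + m) ` Poly_Mapping.keys g"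
proof
  show "Poly_Mapping.keys (g * mon m) \<subseteq> (\<lambda>t. t + m) ` Poly_Mapping.keys g"
    using keys_mult[of g "mon m"] by (auto simp: mon_def)
  show "(\<lambda>t. t + m) ` Poly_Mapping.keys g \<subseteq> Poly_Mapping.keys (g * mon m)"
    by (auto simp: in_keys_iff lookup_mult_mon)
qed


lemma mideal_gen: "ideal_gen (mon ` S) = (mideal S :: ('v,'k::comm_ring_1) mpoly set)"
proof (rule equalityI)
  show "ideal_gen (mon ` S) \<subseteq> (mideal S :: ('v,'k) mpoly set)"
  proof
    fix p :: "('v,'k) mpoly" assume "p \<in> ideal_gen (mon ` S)"
    then obtain F c where p: "p = (\<Sum>g\<in>F. c g * g)" and F: "finite F" "F \<subseteq> mon ` S"
      unfolding ideal_gen_def by blast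
    show "p \<in> mideal S" unfolding mideal_def
    proof (intro CollectI ballI)
      fix t assume "t \<in> Poly_Mapping.keys p"
      then have "t \<in> (\<Union>g\<in>F. Poly_Mapping.keys (c g * g))" using keys_sum[of "\<lambda>g. c g * g" F] p by auto
      then obtain g where g: "g \<in> F" "t \<in> Poly_Mapping.keys (c g * g)" by blast
      then obtain m where m: "m \<in> S" "g = mon m" using F by auto
      then have "t \<in> (\<lambda>u. u + m) ` Poly_Mapping.keys (c g)" using g keys_mult_mon by metis
      then show "\<exists>s\<in>S. mle s t" using m mle_add by blast
    qed
  qed
  show "(mideal S :: ('v,'k) mpoly set) \<subseteq> ideal_gen (mon ` S)"
  proof
    fix p :: "('v,'k) mpoly" assume "p \<in> mideal S"
    then have "\<forall>t\<in>Poly_Mapping.keys p. \<exists>s. s \<in> S \<and> mle s t" unfolding mideal_def by blast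
    then obtain \<sigma> where sig: "\<And>t. t \<in> Poly_Mapping.keys p \<Longrightarrow> \<sigma> t \<in> S \<and> mle (\<sigma> t) t"
      by metis
    define K where "K = Poly_Mapping.keys p"
    define F where "F = (\<lambda>t. mon (\<sigma> t) :: ('v,'k) mpoly) ` K"
    define c where "c g = (\<Sum>t\<in>{t\<in>K. mon (\<sigma> t) = g}. Poly_Mapping.single (t - \<sigma> t) (Poly_Mapping.lookup p t))" for g :: "('v,'k) mpoly"
    have finK: "finite K" unfolding K_def by simp
    have "(\<Sum>g\<in>F. c g * g) = (\<Sum>g\<in>F. \<Sum>t\<in>{t\<in>K. mon (\<sigma> t) = g}. Poly_Mapping.single t (Poly_Mapping.lookup p t))"
    proof (rule sum.cong[OF refl])
      fix g assume "g \<in> F"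
      have "c g * g = (\<Sum>t\<in>{t\<in>K. mon (\<sigma> t) = g}. Poly_Mapping.single (t - \<sigma> t) (Poly_Mapping.lookup p t) * g)"
        unfolding c_def by (rule sum_distrib_right)
      also have "\<dots> = (\<Sum>t\<in>{t\<in>K. mon (\<sigma> t) = g}. Poly_Mapping.single t (Poly_Mapping.lookup p t))"
      proof (rule sum.cong[OF refl])
        fix t assume t: "t \<in> {t\<in>K. mon (\<sigma> t) = g}"
        then have "mle (\<sigma> t) t" using sig K_def by auto
        then have e: "t - \<sigma> t + \<sigma> t = t" by (rule mle_diff)
        from t have g: "g = mon (\<sigma> t)" by auto
        from e show "Poly_Mapping.single (t - \<sigma> t) (Poly_Mapping.lookup p t) * g = Poly_Mapping.single t (Poly_Mapping.lookup p t)"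
          by (simp add: g mon_def mult_single)
      qed
      finally show "c g * g = (\<Sum>t\<in>{t\<in>K. mon (\<sigma> t) = g}. Poly_Mapping.single t (Poly_Mapping.lookup p t))" .
    qed
    also have "\<dots> = (\<Sum>t\<in>K. Poly_Mapping.single t (Poly_Mapping.lookup p t))"
    proof (rule sum.group)
      show "finite K" by (rule finK)
      show "finite F" unfolding F_def using finK by (rule finite_imageI)
      show "(\<lambda>t. mon (\<sigma> t)) ` K \<subseteq> F" unfolding F_def by (rule subset_refl)
    qed
    also have "\<dots> = p" unfolding K_def by (rule decomp[symmetric])
    finally have "p = (\<Sum>g\<in>F. c g * g)" by simp
    moreover have "finite F" "F \<subseteq> mon ` S" using finK sig unfolding F_def K_def by auto
    ultimately show "p \<in> ideal_gen (mon ` S)" unfolding ideal_gen_def by blast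
  qed
qed

lemma mideal_sum: "ideal_sum (mideal A) (mideal B) = (mideal (A \<union> B) :: ('v,'k::comm_ring_1) mpoly set)"
proof (rule equalityI)
  show "ideal_sum (mideal A) (mideal B) \<subseteq> (mideal (A \<union> B) :: ('v,'k) mpoly set)"
  proof
    fix p :: "('v,'k) mpoly" assume "p \<in> ideal_sum (mideal A) (mideal B)"
    then obtain a b where p: "p = a + b" "a \<in> mideal A" "b \<in> mideal B" unfolding ideal_sum_def by blast
    show "p \<in> mideal (A \<union> B)" unfolding mideal_def
    proof (intro CollectI ballI)
      fix t assume "t \<in> Poly_Mapping.keys p"
      then have "t \<in> Poly_Mapping.keys a \<union> Poly_Mapping.keys b" using keys_add[of a b] p by auto
      then show "\<exists>s\<in>A \<union> B. mle s t" using p unfolding mideal_def by blast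
    qed
  qed
  show "(mideal (A \<union> B) :: ('v,'k) mpoly set) \<subseteq> ideal_sum (mideal A) (mideal B)"
  proof
    fix p :: "('v,'k) mpoly" assume p: "p \<in> mideal (A \<union> B)"
    define K where "K = Poly_Mapping.keys p"
    define T where "T = {t\<in>K. \<exists>s\<in>A. mle s t}"
    define p1 where "p1 = (\<Sum>t\<in>T. Poly_Mapping.single t (Poly_Mapping.lookup p t))"
    define p2 where "p2 = (\<Sum>t\<in>K - T. Poly_Mapping.single t (Poly_Mapping.lookup p t))"
    have finK: "finite K" unfolding K_def by simp
    have "p = (\<Sum>t\<in>K. Poly_Mapping.single t (Poly_Mapping.lookup p t))" unfolding K_def by (rule decomp)
    also have "\<dots> = p1 + p2"
    proof -
      have TK: "T \<subseteq> K" by (auto simp: T_def)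
      show ?thesis unfolding p1_def p2_def
        using sum.subset_diff[OF TK finK, of "\<lambda>t. Poly_Mapping.single t (Poly_Mapping.lookup p t)"]
        by (simp add: add.commute)
    qed
    finally have pe: "p = p1 + p2" .
    have "p1 \<in> mideal A" using keys_sum_single[of "\<lambda>t. Poly_Mapping.lookup p t" T]
      unfolding mideal_def p1_def T_def by blast
    moreover have "p2 \<in> mideal B"
    proof -
      have "Poly_Mapping.keys p2 \<subseteq> K - T" unfolding p2_def by (rule keys_sum_single)
      then show ?thesis using p unfolding mideal_def T_def K_def by blast
    qed
    ultimately show "p \<in> ideal_sum (mideal A) (mideal B)" using pe unfolding ideal_sum_def by blast
  qed
qed

lemma mle_shift: "mle s (t + m) \<longleftrightarrow> mle (s - m) t"
  unfolding mle_def by (simp add: lookup_add lookup_minus le_diff_conv)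

lemma mideal_colon: "colon (mideal S) (mon m) = (mideal ((\<lambda>s. s - m) ` S) :: ('v,'k::comm_ring_1) mpoly set)"
proof -
  have "g * mon m \<in> mideal S \<longleftrightarrow> g \<in> mideal ((\<lambda>s. s - m) ` S)" for g :: "('v,'k) mpoly"
    unfolding mideal_def by (auto simp: keys_mult_mon mle_shift)
  then show ?thesis unfolding colon_def by blast
qed

lemma mideal_mono: "(\<And>a. a \<in> A \<Longrightarrow> \<exists>b\<in>B. mle b a) \<Longrightarrow> mideal A \<subseteq> mideal B"
proof
  fix p assume A: "\<And>a. a \<in> A \<Longrightarrow> \<exists>b\<in>B. mle b a" and p: "p \<in> mideal A"
  show "p \<in> mideal B" unfolding mideal_def
  proof (intro CollectI ballI)
    fix t assume "t \<in> Poly_Mapping.keys p"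
    then obtain a where a: "a \<in> A" "mle a t" using p unfolding mideal_def by blast
    then obtain b where "b \<in> B" "mle b a" using A by blast
    then show "\<exists>b\<in>B. mle b t" using a mle_trans by blast
  qed
qed

lemma mideal_eq: "(\<And>a. a \<in> A \<Longrightarrow> \<exists>b\<in>B. mle b a) \<Longrightarrow> (\<And>b. b \<in> B \<Longrightarrow> \<exists>a\<in>A. mle a b) \<Longrightarrow> mideal A = mideal B"
  by (rule subset_antisym; rule mideal_mono) auto


definition sg :: "'v \<Rightarrow> ('v \<Rightarrow>\<^sub>0 nat)" where "sg z = Poly_Mapping.single z 1"

lemma lk_sg [simp]: "Poly_Mapping.lookup (sg a) v = (if a = v then 1 else 0)"
  by (simp add: sg_def lookup_single when_def)

lemma Var_mon: "Var z = mon (sg z)"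
  by (simp add: Var_def mon_def sg_def)

lemma Var2: "Var a * Var b = mon (sg a + sg b)"
  by (simp add: Var_mon mon_def mult_single)

lemma Var3: "Var a * Var b * Var c = mon (sg a + sg b + sg c)"
  by (simp add: Var_mon mon_def mult_single)

definition P3 :: "'v set set \<Rightarrow> ('v \<Rightarrow>\<^sub>0 nat) set" where
  "P3 E = {sg a + sg b + sg c | a b c. is_3path E a b c}"

definition P2 :: "'v set set \<Rightarrow> ('v \<Rightarrow>\<^sub>0 nat) set" where
  "P2 E = {sg a + sg b | a b. {a, b} \<in> E}"

lemma I3_m: "I3 E = mideal (P3 E)"
proof -
  have eq: "{Var a * Var b * Var c | a b c. is_3path E a b c} = mon ` P3 E"
    by (auto simp: P3_def Var3)
  show ?thesis unfolding I3_def eq by (rule mideal_gen)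
qed

lemma I2_m: "I2 E = mideal (P2 E)"
proof -
  have eq: "{Var a * Var b | a b. {a, b} \<in> E} = mon ` P2 E"
    by (auto simp: P2_def Var2)
  show ?thesis unfolding I2_def eq by (rule mideal_gen)
qed

lemma gen_Var: "ideal_gen (Var ` W) = mideal (sg ` W)"
proof -
  have eq: "Var ` W = mon ` sg ` W" by (auto simp: Var_mon)
  show ?thesis unfolding eq by (rule mideal_gen)
qed

lemma gen_Var1: "ideal_gen {Var y} = mideal {sg y}"
  using gen_Var[of "{y}"] by simp

lemma gen_Var2: "ideal_gen {Var x * Var y} = mideal {sg x + sg y}"
proof -
  have eq: "{Var x * Var y} = mon ` {sg x + sg y}" by (simp add: Var2)
  show ?thesis unfolding eq by (rule mideal_gen)
qed



lemma edge_neq: "simple_graph E \<Longrightarrow> {a, b} \<in> E \<Longrightarrow> a \<noteq> b"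
  unfolding simple_graph_def by fastforce

lemma mle_sg_iff: "mle (sg z) t \<longleftrightarrow> 1 \<le> Poly_Mapping.lookup t z"
  unfolding mle_def by (metis lk_sg le0)

lemma mle_refl: "mle t t" unfolding mle_def by simp

lemma lk3: "Poly_Mapping.lookup (sg a + sg b + sg c - m) v
   = (if a = v then 1 else 0) + (if b = v then 1 else 0) + (if c = v then 1 else 0) - Poly_Mapping.lookup m v"
  by (simp add: lookup_add lookup_minus)

lemma lk2: "Poly_Mapping.lookup (sg a + sg b) v = (if a = v then 1 else 0) + (if b = v then 1 else 0)"
  by (simp add: lookup_add)

lemma c1:
  assumes d: "a \<noteq> b" "b \<noteq> c" "a \<noteq> c" "{a, b} \<in> E" "{b, c} \<in> E" "{b, a} \<in> E" "{c, b} \<in> E"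
   and nl: "\<And>u w. {u,w} \<in> E \<Longrightarrow> u \<noteq> w" and xney: "x \<noteq> y"
   and F: "\<not> (a \<in> edge_nbhd E x y \<or> b \<in> edge_nbhd E x y \<or> c \<in> edge_nbhd E x y)"
  shows "a \<noteq> x \<and> b \<noteq> x \<and> c \<noteq> x \<and> a \<noteq> y \<and> b \<noteq> y \<and> c \<noteq> y"
  using F d xney nl unfolding edge_nbhd_def nbhd_def
  by (smt (verit) Diff_iff Un_iff mem_Collect_eq singletonD)

lemma c2:
  assumes d: "a \<noteq> b" "b \<noteq> c" "a \<noteq> c" "{a, b} \<in> E" "{b, c} \<in> E"
   and nx: "a \<noteq> x \<and> b \<noteq> x \<and> c \<noteq> x \<and> a \<noteq> y \<and> b \<noteq> y \<and> c \<noteq> y"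
   and F: "\<not> (a \<in> edge_nbhd E x y \<or> b \<in> edge_nbhd E x y \<or> c \<in> edge_nbhd E x y)"
  shows "is_3path (del_verts E (edge_cnbhd E x y)) a b c"
proof -
  have "a \<notin> edge_cnbhd E x y" "b \<notin> edge_cnbhd E x y" "c \<notin> edge_cnbhd E x y"
    using nx F unfolding edge_cnbhd_def cnbhd_def edge_nbhd_def by auto
  then show ?thesis using d unfolding is_3path_def del_verts_def by auto
qed

lemma part1:
  fixes E :: "('v::finite) set set" and x y :: 'v
  assumes sg: "simple_graph E" and xy: "{x, y} \<in> E"
  shows "colon (I3 E :: ('v, 'k::field) mpoly set) (Var x * Var y)
           = ideal_sum (ideal_gen (Var ` edge_nbhd E x y))
                       (I3 (del_verts E (edge_cnbhd E x y)))"
proof -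
  let ?N = "edge_nbhd E x y"
  let ?E' = "del_verts E (edge_cnbhd E x y)"
  let ?m = "sg x + sg y"
  have xney: "x \<noteq> y" using edge_neq[OF sg xy] .
  have nl: "\<And>u w. {u,w} \<in> E \<Longrightarrow> u \<noteq> w" using edge_neq[OF sg] by blast
  have Nxy: "z \<noteq> x \<and> z \<noteq> y" if "z \<in> ?N" for z
    using that nl unfolding edge_nbhd_def nbhd_def by blast
  have lm: "Poly_Mapping.lookup ?m v = (if x = v then 1 else 0) + (if y = v then 1 else 0)" for v
    by (rule lk2)
  have A: "\<exists>q\<in>sg ` ?N \<union> P3 ?E'. mle q p" if "p \<in> (\<lambda>s. s - ?m) ` P3 E" for p
  proof -
    from that obtain a b c where p: "p = sg a + sg b + sg c - ?m" and pa: "is_3path E a b c"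
      unfolding P3_def by blast
    have d: "a \<noteq> b" "b \<noteq> c" "a \<noteq> c" "{a, b} \<in> E" "{b, c} \<in> E" using pa unfolding is_3path_def by auto
    have d2: "{b, a} \<in> E" "{c, b} \<in> E" using d by (simp_all add: insert_commute)
    show ?thesis
    proof (cases "a \<in> ?N \<or> b \<in> ?N \<or> c \<in> ?N")
      case True
      then obtain z where z: "z \<in> ?N" "z = a \<or> z = b \<or> z = c" by blast
      have "1 \<le> Poly_Mapping.lookup p z" using z(2) Nxy[OF z(1)] d unfolding p lk3 lm
        by auto
      then have "mle (sg z) p" by (simp add: mle_sg_iff)
      then show ?thesis using z by blast
    next
      case False
      have nx: "a \<noteq> x \<and> b \<noteq> x \<and> c \<noteq> x \<and> a \<noteq> y \<and> b \<noteq> y \<and> c \<noteq> y"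
        by (rule c1[OF d d2 nl xney False])
      have "is_3path ?E' a b c" by (rule c2[OF d nx False])
      then have "sg a + sg b + sg c \<in> P3 ?E'" unfolding P3_def by blast
      moreover have "mle (sg a + sg b + sg c) p" using nx unfolding p mle_def lk3 lm
        by (auto simp: lookup_add)
      ultimately show ?thesis by blast
    qed
  qed
  have B: "\<exists>q\<in>(\<lambda>s. s - ?m) ` P3 E. mle q p" if "p \<in> sg ` ?N \<union> P3 ?E'" for p
  proof (cases "p \<in> sg ` ?N")
    case True
    then obtain z where z: "p = sg z" "z \<in> ?N" by blast
    have zz: "z \<noteq> x" "z \<noteq> y" using Nxy[OF z(2)] by auto
    show ?thesis
    proof (cases "z \<in> nbhd E x")
      case True
      then have "is_3path E y x z" using zz xney xy unfolding is_3path_def nbhd_def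
        by (auto simp: insert_commute)
      then have "sg y + sg x + sg z \<in> P3 E" unfolding P3_def by blast
      moreover have "mle (sg y + sg x + sg z - ?m) p" unfolding z mle_def lk3 lm
        using zz xney by auto
      ultimately show ?thesis by blast
    next
      case False
      then have "z \<in> nbhd E y" using z unfolding edge_nbhd_def by blast
      then have "is_3path E x y z" using zz xney xy unfolding is_3path_def nbhd_def
        by (auto simp: insert_commute)
      then have "sg x + sg y + sg z \<in> P3 E" unfolding P3_def by blast
      moreover have "mle (sg x + sg y + sg z - ?m) p" unfolding z mle_def lk3 lm
        using zz xney by auto
      ultimately show ?thesis by blast
    qed
  next
    case False
    with that obtain a b c where p: "p = sg a + sg b + sg c" and pa: "is_3path ?E' a b c"
      unfolding P3_def by blast
    have pE: "is_3path E a b c" using pa unfolding is_3path_def del_verts_def by auto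
    have nx: "a \<noteq> x \<and> b \<noteq> x \<and> c \<noteq> x \<and> a \<noteq> y \<and> b \<noteq> y \<and> c \<noteq> y"
      using pa unfolding is_3path_def del_verts_def edge_cnbhd_def cnbhd_def by auto
    have "sg a + sg b + sg c - ?m \<in> (\<lambda>s. s - ?m) ` P3 E" using pE unfolding P3_def by blast
    moreover have "mle (sg a + sg b + sg c - ?m) p" unfolding p mle_def lk3 lm
      by (auto simp: lookup_add)
    ultimately show ?thesis by blast
  qed
  have "colon (I3 E :: ('v, 'k) mpoly set) (Var x * Var y) = mideal ((\<lambda>s. s - ?m) ` P3 E)"
    by (simp add: I3_m Var2 mideal_colon)
  also have "\<dots> = mideal (sg ` ?N \<union> P3 ?E')"
    by (rule mideal_eq) (use A B in auto)
  also have "\<dots> = ideal_sum (ideal_gen (Var ` ?N)) (I3 ?E')"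
    by (simp add: I3_m gen_Var mideal_sum)
  finally show ?thesis .
qed


lemma sg_pair: "{a, b} = {u, w} \<Longrightarrow> sg a + sg b = sg u + sg w"
  by (auto simp: doubleton_eq_iff add.commute)

lemma lk1: "Poly_Mapping.lookup (s - sg x) v = Poly_Mapping.lookup s v - (if x = v then 1 else 0)"
  by (simp add: lookup_minus)

lemma lk3': "Poly_Mapping.lookup (sg a + sg b + sg c) v
   = (if a = v then 1 else 0) + (if b = v then 1 else 0) + (if c = v then 1 else 0)"
  by (simp add: lookup_add)

lemma part2:
  fixes E :: "('v::finite) set set" and x y :: 'v
  assumes sg: "simple_graph E" and xy: "{x, y} \<in> E"
  shows "colon (ideal_sum (I3 E :: ('v, 'k::field) mpoly set) (ideal_gen {Var x * Var y})) (Var x)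
           = ideal_sum (ideal_sum (ideal_gen {Var y})
                                  (I2 (nbhd_edge E x \<union> complete_edges (nbhd E x - {y}))))
                       (I3 (del_verts E (cnbhd E x)))"
proof -
  let ?H = "nbhd_edge E x \<union> complete_edges (nbhd E x - {y})"
  let ?E' = "del_verts E (cnbhd E x)"
  let ?G = "(\<lambda>s. s - sg x) ` (P3 E \<union> {sg x + sg y})"
  let ?R = "({sg y} \<union> P2 ?H) \<union> P3 ?E'"
  have xney: "x \<noteq> y" using edge_neq[OF sg xy] .
  have nl: "\<And>u w. {u,w} \<in> E \<Longrightarrow> u \<noteq> w" using edge_neq[OF sg] by blast
  have P2I: "sg a + sg b \<in> ?R" if "{a, b} \<in> ?H" for a b
    using that unfolding P2_def by blast
  have NE: "{a, b} \<in> ?H" if "is_3path E x a b" for a b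
    using that unfolding nbhd_edge_def is_3path_def by blast
  have CE: "{a, b} \<in> ?H" if "{x, a} \<in> E" "{x, b} \<in> E" "a \<noteq> y" "b \<noteq> y" "a \<noteq> b" for a b
    using that unfolding complete_edges_def nbhd_def by blast
  have A: "\<exists>q\<in>?R. mle q p" if "p \<in> ?G" for p
  proof -
    from that consider (xy) "p = sg x + sg y - sg x" | (pth) a b c where "p = sg a + sg b + sg c - sg x" "is_3path E a b c"
      unfolding P3_def by blast
    then show ?thesis
    proof cases
      case xy
      have "1 \<le> Poly_Mapping.lookup p y" unfolding xy lk1 using xney by (simp add: lookup_add)
      then show ?thesis by (auto simp: mle_sg_iff)
    next
      case (pth a b c)
      note p = pth(1)
      have d: "a \<noteq> b" "b \<noteq> c" "a \<noteq> c" "{a, b} \<in> E" "{b, c} \<in> E" using pth(2) unfolding is_3path_def by auto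
      have d2: "{b, a} \<in> E" "{c, b} \<in> E" using d by (simp_all add: insert_commute)
      have lp: "Poly_Mapping.lookup p v = (if a = v then 1 else 0) + (if b = v then 1 else 0) + (if c = v then 1 else 0) - (if x = v then 1 else 0)" for v
        unfolding p lk1 lk3' ..
      show ?thesis
      proof (cases "y = a \<or> y = b \<or> y = c")
        case True
        have "1 \<le> Poly_Mapping.lookup p y" unfolding lp using True xney d by auto
        then show ?thesis by (auto simp: mle_sg_iff)
      next
        case ny: False
        show ?thesis
        proof (cases "a = x")
          case True
          have "is_3path E x b c" using True d unfolding is_3path_def by auto
          then have "sg b + sg c \<in> ?R" using NE P2I by blast
          moreover have "mle (sg b + sg c) p" unfolding mle_def lk2 lp using True d by auto
          ultimately show ?thesis by blast
        next
          case nax: False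
          show ?thesis
          proof (cases "c = x")
            case True
            have "is_3path E x b a" using True d d2 unfolding is_3path_def by auto
            then have "sg b + sg a \<in> ?R" using NE P2I by blast
            moreover have "mle (sg b + sg a) p" unfolding mle_def lk2 lp using True d by auto
            ultimately show ?thesis by blast
          next
            case ncx: False
            show ?thesis
            proof (cases "b = x")
              case True
              have "{a, c} \<in> ?H" using True d d2 ny by (intro CE) auto
              then have "sg a + sg c \<in> ?R" using P2I by blast
              moreover have "mle (sg a + sg c) p" unfolding mle_def lk2 lp using True d by auto
              ultimately show ?thesis by blast
            next
              case nbx: False
              show ?thesis
              proof (cases "a \<in> nbhd E x")
                case True
                have "{a, b} \<in> ?H"
                proof (cases "b \<in> nbhd E x")
                  case True
                  then show ?thesis using \<open>a \<in> nbhd E x\<close> d ny by (intro CE) (auto simp: nbhd_def)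
                next
                  case False
                  have "is_3path E x a b" using \<open>a \<in> nbhd E x\<close> d nax nbx unfolding is_3path_def nbhd_def by auto
                  then show ?thesis by (rule NE)
                qed
                then have "sg a + sg b \<in> ?R" using P2I by blast
                moreover have "mle (sg a + sg b) p" unfolding mle_def lk2 lp using nax nbx ncx d by auto
                ultimately show ?thesis by blast
              next
                case na: False
                show ?thesis
                proof (cases "b \<in> nbhd E x")
                  case True
                  have "is_3path E x b c" using True d nbx ncx unfolding is_3path_def nbhd_def by auto
                  then have "sg b + sg c \<in> ?R" using NE P2I by blast
                  moreover have "mle (sg b + sg c) p" unfolding mle_def lk2 lp using nax nbx ncx d by auto
                  ultimately show ?thesis by blast
                next
                  case nb: False
                  show ?thesis
                  proof (cases "c \<in> nbhd E x")
                    case True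
                    have "is_3path E x c b" using True d d2 nbx ncx unfolding is_3path_def nbhd_def by auto
                    then have "sg c + sg b \<in> ?R" using NE P2I by blast
                    moreover have "mle (sg c + sg b) p" unfolding mle_def lk2 lp using nax nbx ncx d by auto
                    ultimately show ?thesis by blast
                  next
                    case nc: False
                    have "is_3path ?E' a b c" using d na nb nc nax nbx ncx
                      unfolding is_3path_def del_verts_def cnbhd_def by auto
                    then have "sg a + sg b + sg c \<in> ?R" unfolding P3_def by blast
                    moreover have "mle (sg a + sg b + sg c) p" unfolding mle_def lk3' lp using nax nbx ncx by auto
                    ultimately show ?thesis by blast
                  qed
                qed
              qed
            qed
          qed
        qed
      qed
    qed
  qed
  have B: "\<exists>q\<in>?G. mle q p" if "p \<in> ?R" for p
  proof -
    from that consider (py) "p = sg y" | (p2) a b where "p = sg a + sg b" "{a, b} \<in> ?H"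
      | (p3) a b c where "p = sg a + sg b + sg c" "is_3path ?E' a b c"
      unfolding P2_def P3_def by blast
    then show ?thesis
    proof cases
      case py
      have "sg x + sg y - sg x \<in> ?G" by blast
      moreover have "mle (sg x + sg y - sg x) p" unfolding py mle_def lk1 lk2 using xney by auto
      ultimately show ?thesis by blast
    next
      case (p2 a b)
      from p2(2) show ?thesis
      proof
        assume "{a, b} \<in> nbhd_edge E x"
        then obtain u w where uw: "{a, b} = {u, w}" "is_3path E x u w" unfolding nbhd_edge_def by blast
        have "sg x + sg u + sg w \<in> P3 E" using uw(2) unfolding P3_def by blast
        then have "sg x + sg u + sg w - sg x \<in> ?G" by blast
        moreover have "mle (sg x + sg u + sg w - sg x) p" unfolding p2(1) sg_pair[OF uw(1)]
          mle_def lk1 lk3' lk2 using uw(2) unfolding is_3path_def by auto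
        ultimately show ?thesis by blast
      next
        assume "{a, b} \<in> complete_edges (nbhd E x - {y})"
        then obtain u w where uw: "{a, b} = {u, w}" "u \<in> nbhd E x" "w \<in> nbhd E x" "u \<noteq> w"
          unfolding complete_edges_def by blast
        have "is_3path E u x w" using uw nl unfolding is_3path_def nbhd_def
          by (auto simp: insert_commute)
        then have "sg u + sg x + sg w \<in> P3 E" unfolding P3_def by blast
        then have "sg u + sg x + sg w - sg x \<in> ?G" by blast
        moreover have "mle (sg u + sg x + sg w - sg x) p" unfolding p2(1) sg_pair[OF uw(1)]
          mle_def lk1 lk3' lk2 by auto
        ultimately show ?thesis by blast
      qed
    next
      case (p3 a b c)
      have pE: "is_3path E a b c" using p3(2) unfolding is_3path_def del_verts_def by auto
      have nx: "a \<noteq> x \<and> b \<noteq> x \<and> c \<noteq> x"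
        using p3(2) unfolding is_3path_def del_verts_def cnbhd_def by auto
      have "sg a + sg b + sg c - sg x \<in> ?G" using pE unfolding P3_def by blast
      moreover have "mle (sg a + sg b + sg c - sg x) p" unfolding p3(1) mle_def lk1 lk3'
        using nx by auto
      ultimately show ?thesis by blast
    qed
  qed
  have "colon (ideal_sum (I3 E :: ('v, 'k) mpoly set) (ideal_gen {Var x * Var y})) (Var x) = mideal ?G"
    unfolding I3_m gen_Var2 mideal_sum by (simp only: Var_mon mideal_colon)
  also have "\<dots> = mideal ?R"
    by (rule mideal_eq) (use A B in auto)
  also have "\<dots> = ideal_sum (ideal_sum (ideal_gen {Var y}) (I2 ?H)) (I3 ?E')"
    by (simp add: I3_m I2_m gen_Var1 mideal_sum)
  finally show ?thesis .
qed


theorem lemma4p1: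
  fixes E :: "('v::finite) set set" and x y :: 'v
  assumes "simple_graph E" and "{x, y} \<in> E"
  shows "colon (I3 E :: ('v, 'k::field) mpoly set) (Var x * Var y)
           = ideal_sum (ideal_gen (Var ` edge_nbhd E x y))
                       (I3 (del_verts E (edge_cnbhd E x y)))
       \<and> colon (ideal_sum (I3 E :: ('v, 'k::field) mpoly set) (ideal_gen {Var x * Var y})) (Var x)
           = ideal_sum (ideal_sum (ideal_gen {Var y})
                                  (I2 (nbhd_edge E x \<union> complete_edges (nbhd E x - {y}))))
                       (I3 (del_verts E (cnbhd E x)))"
    using part1[OF assms] part2[OF assms] by blast

end
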